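(* Let $(G,\gamma)$ and $(T,\eta)$ be unary FA-presentable directed graphs and let $g\in G$, $t\in T$. Then the directed graph obtained by attaching $(T,\eta)$ at $t$ to $g$ is unary FA-presentable.
   Context: A directed graph is a set with a binary edge relation. Attaching $(T,\eta)$ at $t$ to the vertex $g$ of $(G,\gamma)$ means taking the disjoint union of the two graphs and identifying $g$ and $t$. A structure $(X,\eta)$ is unary FA-presentable if there exist a regular language $L\subseteq a^*$ and a surjection $\phi:L\to X$ such that $\{(u,v)\in L^2:u\phi=v\phi\}$ and $\{(u,v)\in L^2:(u\phi,v\phi)\in\eta\}$ are regular relations (the words $\mathrm{conv}(u,v)$ over $\{a,\$\}^2$, reading $u,v$ in parallel with the shorter padded by $\$$, form regular languages). *)

theory Defs
  imports Main
begin

definition regular :: "'a list set \<Rightarrow> bool" where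
  "regular L \<longleftrightarrow>
     (\<exists>(Q::nat set) q0 (\<delta>::nat \<Rightarrow> 'a \<Rightarrow> nat) F.
        finite Q \<and> q0 \<in> Q \<and> (\<forall>q\<in>Q. \<forall>x. \<delta> q x \<in> Q) \<and> F \<subseteq> Q \<and>
        L = {w. foldl \<delta> q0 w \<in> F})"

text \<open>Convolution of two words: read in parallel, the shorter padded by the
padding symbol, represented by None (letters x are represented by Some x).\<close>
definition conv :: "'a list \<Rightarrow> 'b list \<Rightarrow> ('a option \<times> 'b option) list" where
  "conv u v = map (\<lambda>i. (if i < length u then Some (u ! i) else None,
                        if i < length v then Some (v ! i) else None))
                  [0..<max (length u) (length v)]"

text \<open>Words over the one-letter alphabet {a} are elements of type unit list.\<close>
definition unary_fa_presentable :: "'v set \<Rightarrow> ('v \<times> 'v) set \<Rightarrow> bool" where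
  "unary_fa_presentable X \<eta> \<longleftrightarrow>
     (\<exists>(L::unit list set) (\<phi>::unit list \<Rightarrow> 'v).
        regular L \<and> \<phi> ` L = X \<and>
        regular {conv u v | u v. u \<in> L \<and> v \<in> L \<and> \<phi> u = \<phi> v} \<and>
        regular {conv u v | u v. u \<in> L \<and> v \<in> L \<and> (\<phi> u, \<phi> v) \<in> \<eta>})"

definition digraph :: "'v set \<Rightarrow> ('v \<times> 'v) set \<Rightarrow> bool" where
  "digraph V E \<longleftrightarrow> E \<subseteq> V \<times> V"

text \<open>Attaching (T,eta) at t to vertex g of (G,gamma): disjoint union (via Inl/Inr)
with t identified with g (t is represented by Inl g).\<close>
definition attach_map :: "'a \<Rightarrow> 'b \<Rightarrow> 'b \<Rightarrow> 'a + 'b" where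
  "attach_map g t s = (if s = t then Inl g else Inr s)"

definition attach_vertices :: "'a set \<Rightarrow> 'b set \<Rightarrow> 'a \<Rightarrow> 'b \<Rightarrow> ('a + 'b) set" where
  "attach_vertices G T g t = Inl ` G \<union> attach_map g t ` T"

definition attach_edges ::
  "('a \<times> 'a) set \<Rightarrow> ('b \<times> 'b) set \<Rightarrow> 'a \<Rightarrow> 'b \<Rightarrow> (('a + 'b) \<times> ('a + 'b)) set" where
  "attach_edges \<gamma> \<eta> g t =
     map_prod Inl Inl ` \<gamma> \<union> map_prod (attach_map g t) (attach_map g t) ` \<eta>"

end

theory Submission
  imports Defs
begin

definition Der :: "'a list \<Rightarrow> 'a list set \<Rightarrow> 'a list set" where
  "Der w L = {v. w @ v \<in> L}"

lemma MN1:
  assumes "regular L" shows "finite (range (\<lambda>w. Der w L))"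
proof -
  from assms obtain Q q0 \<delta> F where H: "finite (Q::nat set) \<and> q0 \<in> Q \<and> (\<forall>q\<in>Q. \<forall>x. \<delta> q x \<in> Q) \<and> F \<subseteq> Q \<and>
        L = {w. foldl \<delta> q0 w \<in> F}"
    unfolding regular_def by blast
  have Q: "finite Q" "q0 \<in> Q" "\<forall>q\<in>Q. \<forall>x. \<delta> q x \<in> Q" "F \<subseteq> Q"
    and L: "L = {w. foldl \<delta> q0 w \<in> F}" using H by simp_all
  have inQ: "q \<in> Q \<Longrightarrow> foldl \<delta> q w \<in> Q" for w q
    using Q(3) by (induct w arbitrary: q) auto
  have "Der w L = (\<lambda>q. {v. foldl \<delta> q v \<in> F}) (foldl \<delta> q0 w)" for w
    by (simp add: Der_def L)
  hence "range (\<lambda>w. Der w L) \<subseteq> (\<lambda>q. {v. foldl \<delta> q v \<in> F}) ` Q"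
    using inQ Q(2) by auto
  thus ?thesis using Q(1) finite_subset by blast
qed

lemma Der_snoc: "Der (w @ [x]) L = Der [x] (Der w L)"
  by (simp add: Der_def)

lemma MN2:
  assumes fin: "finite (range (\<lambda>w. Der w L))" shows "regular L"
proof -
  define D where "D = range (\<lambda>w. Der w L)"
  have finD: "finite D" using fin unfolding D_def .
  obtain h where bij: "bij_betw h {0..<card D} D"
    using ex_bij_betw_nat_finite[OF finD] by blast
  define e where "e = inv_into {0..<card D} h"
  have eQ: "X \<in> D \<Longrightarrow> e X \<in> {0..<card D}" for X
    unfolding e_def using bij by (metis bij_betw_def inv_into_into)
  have he: "X \<in> D \<Longrightarrow> h (e X) = X" for X
    unfolding e_def using bij by (metis bij_betw_def f_inv_into_f)
  have hD: "q \<in> {0..<card D} \<Longrightarrow> h q \<in> D" for q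
    using bij bij_betwE by blast
  have DerD: "Der w L \<in> D" for w unfolding D_def by blast
  define \<delta> where "\<delta> = (\<lambda>q x. e (Der [x] (h q)))"
  have fold: "foldl \<delta> (e L) w = e (Der w L)" for w
  proof (induct w rule: rev_induct)
    case Nil then show ?case by (simp add: Der_def)
  next
    case (snoc x w)
    then show ?case by (simp add: \<delta>_def he DerD Der_snoc)
  qed
  show ?thesis
    unfolding regular_def
  proof (intro exI conjI)
    show "finite {0..<card D}" by simp
    show "e L \<in> {0..<card D}" using eQ DerD[of "[]"] by (simp add: Der_def)
    show "\<forall>q\<in>{0..<card D}. \<forall>x. \<delta> q x \<in> {0..<card D}"
    proof (intro ballI allI)
      fix q x assume "q \<in> {0..<card D}"
      then have "h q \<in> range (\<lambda>w. Der w L)" using hD unfolding D_def by simp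
      then obtain w where "h q = Der w L" by (elim rangeE) simp
      then show "\<delta> q x \<in> {0..<card D}" using eQ DerD[of "w@[x]"]
        by (simp add: \<delta>_def Der_snoc)
    qed
    show "{q \<in> {0..<card D}. [] \<in> h q} \<subseteq> {0..<card D}" by blast
    show "L = {w. foldl \<delta> (e L) w \<in> {q \<in> {0..<card D}. [] \<in> h q}}"
    proof (rule set_eqI)
      fix w
      have 1: "e (Der w L) \<in> {0..<card D}" "h (e (Der w L)) = Der w L"
        using eQ he DerD by blast+
      show "w \<in> L \<longleftrightarrow> w \<in> {w. foldl \<delta> (e L) w \<in> {q \<in> {0..<card D}. [] \<in> h q}}"
        using 1 by (simp add: fold Der_def)
    qed
  qed
qed

definition urep :: "nat \<Rightarrow> unit list" where "urep n = replicate n ()"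
definition UR :: "nat set \<Rightarrow> bool" where "UR A \<longleftrightarrow> finite (range (\<lambda>k. {j. k + j \<in> A}))"

lemma unit_list: "(w::unit list) = urep (length w)"
  by (induct w) (auto simp: urep_def)

lemma length_urep[simp]: "length (urep n) = n" by (simp add: urep_def)

lemma urep_add: "urep m @ urep n = urep (m + n)"
  by (simp add: urep_def replicate_add)

lemma mem_urep_image: "(x::unit list) \<in> urep ` X \<longleftrightarrow> length x \<in> X"
  by (metis image_iff length_urep unit_list)

lemma UR_regular: assumes "UR A" shows "regular (urep ` A)"
proof (rule MN2)
  have "Der w (urep ` A) = urep ` {j. length w + j \<in> A}" for w
    unfolding Der_def by (auto simp: mem_urep_image)
  hence "range (\<lambda>w. Der w (urep ` A)) \<subseteq> (\<lambda>X. urep ` X) ` range (\<lambda>k. {j. k + j \<in> A})"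
    by auto
  thus "finite (range (\<lambda>w. Der w (urep ` A)))"
    using assms unfolding UR_def by (meson finite_imageI finite_subset)
qed

lemma regular_UR: assumes "regular (L::unit list set)" shows "UR {n. urep n \<in> L}"
proof -
  have "{j. k + j \<in> {n. urep n \<in> L}} = {j. urep j \<in> Der (urep k) L}" for k
    by (simp add: Der_def urep_add)
  hence "range (\<lambda>k. {j. k + j \<in> {n. urep n \<in> L}}) \<subseteq> (\<lambda>X. {j. urep j \<in> X}) ` range (\<lambda>w. Der w L)"
    by auto
  thus ?thesis unfolding UR_def using MN1[OF assms] by (meson finite_imageI finite_subset)
qed

lemma upt0_Suc: "[0..<Suc n] = 0 # map Suc [0..<n]"
  by (simp add: upt_conv_Cons map_Suc_upt del: upt_Suc)
lemma conv_Cons: "conv (x#u) (y#v) = (Some x, Some y) # conv u v"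
  unfolding conv_def by (simp add: upt0_Suc del: upt_Suc)
lemma conv_Nil: "conv [] [] = []" by (simp add: conv_def)
lemma conv_ConsL: "conv (x#u) [] = (Some x, None) # conv u []"
  unfolding conv_def by (simp add: upt0_Suc del: upt_Suc)
lemma conv_ConsR: "conv [] (y#v) = (None, Some y) # conv [] v"
  unfolding conv_def by (simp add: upt0_Suc del: upt_Suc)

abbreviation SS :: "unit option \<times> unit option" where "SS \<equiv> (Some (), Some ())"
abbreviation SN :: "unit option \<times> unit option" where "SN \<equiv> (Some (), None)"
abbreviation NS :: "unit option \<times> unit option" where "NS \<equiv> (None, Some ())"

definition cw :: "nat \<Rightarrow> nat \<Rightarrow> (unit option \<times> unit option) list" where
  "cw m n = conv (urep m) (urep n)"

lemma urep_Suc: "urep (Suc n) = () # urep n" by (simp add: urep_def)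
lemma urep_0: "urep 0 = []" by (simp add: urep_def)

lemma cw_SS: "cw (Suc m) (Suc n) = SS # cw m n"
  by (simp add: cw_def urep_Suc conv_Cons)
lemma cw_SN: "cw (Suc m) 0 = SN # cw m 0"
  by (simp add: cw_def urep_Suc urep_0 conv_ConsL)
lemma cw_NS: "cw 0 (Suc n) = NS # cw 0 n"
  by (simp add: cw_def urep_Suc urep_0 conv_ConsR)
lemma cw_00: "cw 0 0 = []"
  by (simp add: cw_def urep_0 conv_Nil)

lemma cw_L: "cw m 0 = replicate m SN"
  by (induct m) (simp_all add: cw_SN cw_00)
lemma cw_R: "cw 0 n = replicate n NS"
  by (induct n) (simp_all add: cw_NS cw_00)

lemma cw_fst: "length (filter (\<lambda>p. fst p \<noteq> None) (cw m n)) = m"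
proof (induct m arbitrary: n)
  case 0 then show ?case by (simp add: cw_R)
next
  case (Suc m) then show ?case by (cases n) (simp_all add: cw_L cw_SS)
qed
lemma cw_snd: "length (filter (\<lambda>p. snd p \<noteq> None) (cw m n)) = n"
proof (induct n arbitrary: m)
  case 0 then show ?case by (simp add: cw_L)
next
  case (Suc n) then show ?case by (cases m) (simp_all add: cw_R cw_SS)
qed
lemma cw_inj: "cw m n = cw m' n' \<longleftrightarrow> m = m' \<and> n = n'"
  by (metis cw_fst cw_snd)

lemma cw_diag: "cw (k + m) (k + n) = replicate k SS @ cw m n"
  by (induct k) (simp_all add: cw_SS)

lemma cw_diagL: "cw (k + a) k = replicate k SS @ replicate a SN"
  using cw_diag[of k a 0] by (simp add: cw_L)
lemma cw_diagR: "cw k (k + a) = replicate k SS @ replicate a NS"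
  using cw_diag[of k 0 a] by (simp add: cw_R)

definition PL :: "(nat \<times> nat) set \<Rightarrow> (unit option \<times> unit option) list set" where
  "PL S = (\<lambda>(m,n). cw m n) ` S"

lemma mem_PL: "cw m n \<in> PL S \<longleftrightarrow> (m, n) \<in> S"
  unfolding PL_def using cw_inj by fastforce

lemma Cons_cw_SS: "SS # v = cw m n \<longleftrightarrow> (\<exists>m' n'. m = Suc m' \<and> n = Suc n' \<and> v = cw m' n')"
  by (cases m; cases n) (simp_all add: cw_SS cw_SN cw_NS cw_00)
lemma Cons_cw_SN: "SN # v = cw m n \<longleftrightarrow> (\<exists>m'. m = Suc m' \<and> n = 0 \<and> v = replicate m' SN)"
  by (cases m; cases n) (simp_all add: cw_SS cw_SN cw_NS cw_00 cw_L)
lemma Cons_cw_NS: "NS # v = cw m n \<longleftrightarrow> (\<exists>n'. m = 0 \<and> n = Suc n' \<and> v = replicate n' NS)"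
  by (cases m; cases n) (simp_all add: cw_SS cw_SN cw_NS cw_00 cw_R)
lemma Cons_cw_NN: "(None, None) # v \<noteq> cw m n"
  by (cases m; cases n) (simp_all add: cw_SS cw_SN cw_NS cw_00)

definition shk :: "nat \<Rightarrow> (nat \<times> nat) set \<Rightarrow> (nat \<times> nat) set" where
  "shk k S = {(m,n). (k + m, k + n) \<in> S}"
definition TL :: "(nat \<times> nat) set \<Rightarrow> nat \<Rightarrow> nat \<Rightarrow> nat set" where
  "TL S k d = {e. (k + d + e, k) \<in> S}"
definition TR :: "(nat \<times> nat) set \<Rightarrow> nat \<Rightarrow> nat \<Rightarrow> nat set" where
  "TR S k d = {e. (k, k + d + e) \<in> S}"
definition PR :: "(nat \<times> nat) set \<Rightarrow> bool" where
  "PR S \<longleftrightarrow> finite (range (\<lambda>k. shk k S)) \<and> finite (range (\<lambda>(k,d). TL S k d))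
     \<and> finite (range (\<lambda>(k,d). TR S k d))"

lemma Der_PL_SS: "Der [SS] (PL (shk k S)) = PL (shk (Suc k) S)"
proof -
  have "v \<in> Der [SS] (PL (shk k S)) \<longleftrightarrow> v \<in> PL (shk (Suc k) S)" for v
  proof -
    have "v \<in> Der [SS] (PL (shk k S)) \<longleftrightarrow> (\<exists>m n. (m,n) \<in> shk k S \<and> SS # v = cw m n)"
      by (auto simp: Der_def PL_def)
    also have "\<dots> \<longleftrightarrow> (\<exists>m n. (m,n) \<in> shk (Suc k) S \<and> v = cw m n)"
      by (simp add: Cons_cw_SS shk_def) (metis add_Suc_right add_0_right)
    also have "\<dots> \<longleftrightarrow> v \<in> PL (shk (Suc k) S)" by (auto simp: PL_def)
    finally show ?thesis .
  qed
  thus ?thesis by blast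
qed

lemma Der_PL_SN: "Der [SN] (PL (shk k S)) = (\<lambda>e. replicate e SN) ` TL S k 1"
proof -
  have "v \<in> Der [SN] (PL (shk k S)) \<longleftrightarrow> v \<in> (\<lambda>e. replicate e SN) ` TL S k 1" for v
  proof -
    have "v \<in> Der [SN] (PL (shk k S)) \<longleftrightarrow> (\<exists>m n. (m,n) \<in> shk k S \<and> SN # v = cw m n)"
      by (auto simp: Der_def PL_def)
    also have "\<dots> \<longleftrightarrow> (\<exists>e. e \<in> TL S k 1 \<and> v = replicate e SN)"
      by (simp add: Cons_cw_SN shk_def TL_def) (metis add_Suc_right add_0_right)
    also have "\<dots> \<longleftrightarrow> v \<in> (\<lambda>e. replicate e SN) ` TL S k 1" by auto
    finally show ?thesis .
  qed
  thus ?thesis by blast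
qed

lemma Der_PL_NS: "Der [NS] (PL (shk k S)) = (\<lambda>e. replicate e NS) ` TR S k 1"
proof -
  have "v \<in> Der [NS] (PL (shk k S)) \<longleftrightarrow> v \<in> (\<lambda>e. replicate e NS) ` TR S k 1" for v
  proof -
    have "v \<in> Der [NS] (PL (shk k S)) \<longleftrightarrow> (\<exists>m n. (m,n) \<in> shk k S \<and> NS # v = cw m n)"
      by (auto simp: Der_def PL_def)
    also have "\<dots> \<longleftrightarrow> (\<exists>e. e \<in> TR S k 1 \<and> v = replicate e NS)"
      by (simp add: Cons_cw_NS shk_def TR_def) (metis add_Suc_right add_0_right)
    also have "\<dots> \<longleftrightarrow> v \<in> (\<lambda>e. replicate e NS) ` TR S k 1" by auto
    finally show ?thesis .
  qed
  thus ?thesis by blast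
qed

lemma Der_PL_NN: "Der [(None,None)] (PL X) = {}"
  using Cons_cw_NN by (fastforce simp: Der_def PL_def)

lemma Der_rep: "Der [x] ((\<lambda>e. replicate e c) ` Y) = (if x = c then (\<lambda>e. replicate e c) ` {e. Suc e \<in> Y} else {})"
proof -
  have "x # v = replicate e c \<longleftrightarrow> (x = c \<and> (\<exists>e'. e = Suc e' \<and> v = replicate e' c))" for v e
    by (cases e) auto
  thus ?thesis by (auto simp: Der_def)
qed

lemma TL_Suc: "{e. Suc e \<in> TL S k d} = TL S k (Suc d)"
  by (simp add: TL_def)
lemma TR_Suc: "{e. Suc e \<in> TR S k d} = TR S k (Suc d)"
  by (simp add: TR_def)

lemma letter_cases: "(x::unit option \<times> unit option) = SS \<or> x = SN \<or> x = NS \<or> x = (None,None)"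
  by (cases x; rename_tac a b; case_tac a; case_tac b; simp)

lemma PR_regular: assumes "PR S" shows "regular (PL S)"
proof (rule MN2)
  define LL where "LL = PL ` range (\<lambda>k. shk k S) \<union> (\<lambda>Y. (\<lambda>e. replicate e SN) ` Y) ` range (\<lambda>(k,d). TL S k d)
     \<union> (\<lambda>Y. (\<lambda>e. replicate e NS) ` Y) ` range (\<lambda>(k,d). TR S k d) \<union> {{}}"
  have fin: "finite LL" using assms unfolding LL_def PR_def by simp
  have step: "X \<in> LL \<Longrightarrow> Der [x] X \<in> LL" for X x
  proof -
    assume "X \<in> LL"
    then consider (a) k where "X = PL (shk k S)"
      | (b) k d where "X = (\<lambda>e. replicate e SN) ` TL S k d"
      | (c) k d where "X = (\<lambda>e. replicate e NS) ` TR S k d"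
      | (d) "X = {}"
      unfolding LL_def by auto
    then show ?thesis
    proof cases
      case a
      have 1: "PL (shk (Suc k) S) \<in> LL" unfolding LL_def by blast
      have 2: "(\<lambda>e. replicate e SN) ` TL S k 1 \<in> LL" unfolding LL_def by force
      have 3: "(\<lambda>e. replicate e NS) ` TR S k 1 \<in> LL" unfolding LL_def by force
      have 4: "{} \<in> LL" unfolding LL_def by blast
      show ?thesis using letter_cases[of x] 1 2 3 4
        by (auto simp: a Der_PL_SS Der_PL_SN Der_PL_NS Der_PL_NN)
    next
      case b
      have 2: "(\<lambda>e. replicate e SN) ` TL S k (Suc d) \<in> LL" unfolding LL_def by force
      have 4: "{} \<in> LL" unfolding LL_def by blast
      show ?thesis using 2 4 by (simp add: b Der_rep TL_Suc)
    next
      case c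
      have 2: "(\<lambda>e. replicate e NS) ` TR S k (Suc d) \<in> LL" unfolding LL_def by force
      have 4: "{} \<in> LL" unfolding LL_def by blast
      show ?thesis using 2 4 by (simp add: c Der_rep TR_Suc)
    next
      case d
      have 4: "{} \<in> LL" unfolding LL_def by blast
      show ?thesis using 4 by (simp add: d Der_def)
    qed
  qed
  have all: "Der w (PL S) \<in> LL" for w
  proof (induct w rule: rev_induct)
    case Nil
    have "shk 0 S = S" by (simp add: shk_def)
    hence "PL S \<in> LL" unfolding LL_def by (metis UnI1 rangeI image_eqI)
    then show ?case by (simp add: Der_def)
  next
    case (snoc x w)
    then show ?case using step by (simp add: Der_snoc)
  qed
  hence "range (\<lambda>w. Der w (PL S)) \<subseteq> LL" by blast
  thus "finite (range (\<lambda>w. Der w (PL S)))" using fin finite_subset by blast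
qed

lemma regular_PR: assumes "regular (PL S)" shows "PR S"
proof -
  have fin: "finite (range (\<lambda>w. Der w (PL S)))" using MN1[OF assms] .
  have e1: "shk k S = (\<lambda>X. {(m,n). cw m n \<in> X}) (Der (replicate k SS) (PL S))" for k
    by (simp add: shk_def Der_def cw_diag[symmetric] mem_PL)
  have e2: "TL S k d = (\<lambda>X. {e. replicate e SN \<in> X}) (Der (replicate k SS @ replicate d SN) (PL S))" for k d
  proof -
    have "(replicate k SS @ replicate d SN) @ replicate e SN = cw (k + (d + e)) k" for e
      by (simp add: cw_diagL replicate_add)
    thus ?thesis by (simp add: TL_def Der_def mem_PL add.assoc)
  qed
  have e3: "TR S k d = (\<lambda>X. {e. replicate e NS \<in> X}) (Der (replicate k SS @ replicate d NS) (PL S))" for k d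
  proof -
    have "(replicate k SS @ replicate d NS) @ replicate e NS = cw k (k + (d + e))" for e
      by (simp add: cw_diagR replicate_add)
    thus ?thesis by (simp add: TR_def Der_def mem_PL add.assoc)
  qed
  have "range (\<lambda>k. shk k S) \<subseteq> (\<lambda>X. {(m,n). cw m n \<in> X}) ` range (\<lambda>w. Der w (PL S))"
  proof
    fix X assume "X \<in> range (\<lambda>k. shk k S)"
    then obtain k where "X = shk k S" by blast
    then have "X = (\<lambda>X. {(m,n). cw m n \<in> X}) (Der (replicate k SS) (PL S))" using e1 by simp
    thus "X \<in> (\<lambda>X. {(m,n). cw m n \<in> X}) ` range (\<lambda>w. Der w (PL S))" by blast
  qed
  moreover have "range (\<lambda>(k,d). TL S k d) \<subseteq> (\<lambda>X. {e. replicate e SN \<in> X}) ` range (\<lambda>w. Der w (PL S))"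
  proof
    fix X assume "X \<in> range (\<lambda>(k,d). TL S k d)"
    then obtain k d where "X = TL S k d" by auto
    then have "X = (\<lambda>X. {e. replicate e SN \<in> X}) (Der (replicate k SS @ replicate d SN) (PL S))" using e2 by simp
    thus "X \<in> (\<lambda>X. {e. replicate e SN \<in> X}) ` range (\<lambda>w. Der w (PL S))" by blast
  qed
  moreover have "range (\<lambda>(k,d). TR S k d) \<subseteq> (\<lambda>X. {e. replicate e NS \<in> X}) ` range (\<lambda>w. Der w (PL S))"
  proof
    fix X assume "X \<in> range (\<lambda>(k,d). TR S k d)"
    then obtain k d where "X = TR S k d" by auto
    then have "X = (\<lambda>X. {e. replicate e NS \<in> X}) (Der (replicate k SS @ replicate d NS) (PL S))" using e3 by simp
    thus "X \<in> (\<lambda>X. {e. replicate e NS \<in> X}) ` range (\<lambda>w. Der w (PL S))" by blast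
  qed
  ultimately show ?thesis unfolding PR_def using fin by (meson finite_imageI finite_subset)
qed

lemma fin_range_sub: "finite A \<Longrightarrow> (\<And>x. f x \<in> A) \<Longrightarrow> finite (range f)"
  by (meson finite_subset image_subsetI)

lemma fin2: "finite (range f) \<Longrightarrow> finite (range g) \<Longrightarrow> finite (range (\<lambda>x. h (f x) (g x)))"
  by (rule fin_range_sub[where A = "(\<lambda>(a,b). h a b) ` (range f \<times> range g)"]) auto

lemma PR_Un: assumes "PR S" "PR S'" shows "PR (S \<union> S')"
proof -
  have 1: "(\<lambda>k. shk k (S \<union> S')) = (\<lambda>k. shk k S \<union> shk k S')" by (auto simp: shk_def)
  have 2: "(\<lambda>(k,d). TL (S \<union> S') k d) = (\<lambda>x. (\<lambda>(k,d). TL S k d) x \<union> (\<lambda>(k,d). TL S' k d) x)"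
    by (auto simp: TL_def fun_eq_iff)
  have 3: "(\<lambda>(k,d). TR (S \<union> S') k d) = (\<lambda>x. (\<lambda>(k,d). TR S k d) x \<union> (\<lambda>(k,d). TR S' k d) x)"
    by (auto simp: TR_def fun_eq_iff)
  have "finite (range (\<lambda>k. shk k S \<union> shk k S'))"
    by (rule fin2) (use assms in \<open>auto simp: PR_def\<close>)
  moreover have "finite (range (\<lambda>x. (\<lambda>(k,d). TL S k d) x \<union> (\<lambda>(k,d). TL S' k d) x))"
    by (rule fin2) (use assms in \<open>auto simp: PR_def\<close>)
  moreover have "finite (range (\<lambda>x. (\<lambda>(k,d). TR S k d) x \<union> (\<lambda>(k,d). TR S' k d) x))"
    by (rule fin2) (use assms in \<open>auto simp: PR_def\<close>)
  ultimately show ?thesis unfolding PR_def 1 2 3 by blast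
qed

lemma PR_empty: "PR {}"
  unfolding PR_def shk_def TL_def TR_def by (simp add: case_prod_beta)

lemma PR_times: assumes "UR A" "UR B" shows "PR (A \<times> B)"
proof -
  have 1: "(\<lambda>k. shk k (A \<times> B)) = (\<lambda>k. {j. k + j \<in> A} \<times> {j. k + j \<in> B})" by (auto simp: shk_def)
  have f1: "finite (range (\<lambda>k. shk k (A \<times> B)))" unfolding 1
    using assms unfolding UR_def by (rule fin2)
  have f2: "finite (range (\<lambda>(k,d). TL (A \<times> B) k d))"
  proof (rule fin_range_sub[where A = "insert {} (range (\<lambda>k. {j. k + j \<in> A}))"])
    show "finite (insert {} (range (\<lambda>k. {j. k + j \<in> A})))" using assms(1) unfolding UR_def by simp
    fix x :: "nat \<times> nat"
    obtain k d where x: "x = (k,d)" by (cases x)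
    have "TL (A \<times> B) k d = (if k \<in> B then {j. (k + d) + j \<in> A} else {})"
      by (auto simp: TL_def)
    thus "(\<lambda>(k,d). TL (A \<times> B) k d) x \<in> insert {} (range (\<lambda>k. {j. k + j \<in> A}))"
      by (simp add: x)
  qed
  have f3: "finite (range (\<lambda>(k,d). TR (A \<times> B) k d))"
  proof (rule fin_range_sub[where A = "insert {} (range (\<lambda>k. {j. k + j \<in> B}))"])
    show "finite (insert {} (range (\<lambda>k. {j. k + j \<in> B})))" using assms(2) unfolding UR_def by simp
    fix x :: "nat \<times> nat"
    obtain k d where x: "x = (k,d)" by (cases x)
    have "TR (A \<times> B) k d = (if k \<in> A then {j. (k + d) + j \<in> B} else {})"
      by (auto simp: TR_def)
    thus "(\<lambda>(k,d). TR (A \<times> B) k d) x \<in> insert {} (range (\<lambda>k. {j. k + j \<in> B}))"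
      by (simp add: x)
  qed
  show ?thesis unfolding PR_def using f1 f2 f3 by blast
qed

lemma UR_secL: assumes "PR S" shows "UR {m. (m, n0) \<in> S}"
  unfolding UR_def
proof (rule fin_range_sub[where A = "(\<lambda>k. {j. (k + j, n0) \<in> S}) ` {..<n0} \<union> range (\<lambda>(k,d). TL S k d)"])
  show "finite ((\<lambda>k. {j. (k + j, n0) \<in> S}) ` {..<n0} \<union> range (\<lambda>(k,d). TL S k d))"
    using assms unfolding PR_def by simp
  fix k
  show "{j. k + j \<in> {m. (m, n0) \<in> S}} \<in> (\<lambda>k. {j. (k + j, n0) \<in> S}) ` {..<n0} \<union> range (\<lambda>(k,d). TL S k d)"
  proof (cases "k < n0")
    case True then show ?thesis by auto
  next
    case False
    then have "{j. k + j \<in> {m. (m, n0) \<in> S}} = (\<lambda>(k,d). TL S k d) (n0, k - n0)"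
      by (auto simp: TL_def)
    then show ?thesis by (metis UnI2 rangeI)
  qed
qed

lemma UR_secR: assumes "PR S" shows "UR {n. (m0, n) \<in> S}"
  unfolding UR_def
proof (rule fin_range_sub[where A = "(\<lambda>k. {j. (m0, k + j) \<in> S}) ` {..<m0} \<union> range (\<lambda>(k,d). TR S k d)"])
  show "finite ((\<lambda>k. {j. (m0, k + j) \<in> S}) ` {..<m0} \<union> range (\<lambda>(k,d). TR S k d))"
    using assms unfolding PR_def by simp
  fix k
  show "{j. k + j \<in> {n. (m0, n) \<in> S}} \<in> (\<lambda>k. {j. (m0, k + j) \<in> S}) ` {..<m0} \<union> range (\<lambda>(k,d). TR S k d)"
  proof (cases "k < m0")
    case True then show ?thesis by auto
  next
    case False
    then have "{j. k + j \<in> {n. (m0, n) \<in> S}} = (\<lambda>(k,d). TR S k d) (m0, k - m0)"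
      by (auto simp: TR_def)
    then show ?thesis by (metis UnI2 rangeI)
  qed
qed

lemma UR_diag: assumes "PR S" shows "UR {m. (m, m) \<in> S}"
  unfolding UR_def
proof (rule fin_range_sub[where A = "(\<lambda>X. {j. (j,j) \<in> X}) ` range (\<lambda>k. shk k S)"])
  show "finite ((\<lambda>X. {j. (j,j) \<in> X}) ` range (\<lambda>k. shk k S))" using assms unfolding PR_def by simp
  fix k
  have "{j. k + j \<in> {m. (m, m) \<in> S}} = (\<lambda>X. {j. (j,j) \<in> X}) (shk k S)" by (simp add: shk_def)
  moreover have "(\<lambda>X. {j. (j,j) \<in> X}) (shk k S) \<in> (\<lambda>X. {j. (j,j) \<in> X}) ` range (\<lambda>k. shk k S)"
    by (intro imageI rangeI)
  ultimately show "{j. k + j \<in> {m. (m, m) \<in> S}} \<in> (\<lambda>X. {j. (j,j) \<in> X}) ` range (\<lambda>k. shk k S)"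
    by simp
qed

definition D2 :: "nat \<Rightarrow> nat \<Rightarrow> (nat \<times> nat) set \<Rightarrow> (nat \<times> nat) set" where
  "D2 i j S = {(a,b). a mod 2 = i \<and> b mod 2 = j \<and> (a div 2, b div 2) \<in> S}"

lemma ar_mod: "(k + a) mod 2 = (k mod 2 + a) mod 2" for k a :: nat
  by (simp add: mod_add_left_eq)
lemma ar_div: "(k + a) div 2 = k div 2 + (k mod 2 + a) div 2" for k a :: nat
proof -
  have "k + a = (k mod 2 + a) + k div 2 * 2" using mod_div_mult_eq[of k 2] by linarith
  hence "(k + a) div 2 = ((k mod 2 + a) + k div 2 * 2) div 2" by (rule arg_cong)
  also have "\<dots> = k div 2 + (k mod 2 + a) div 2" by (rule div_mult_self1) simp
  finally show ?thesis .
qed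
lemma ar1: "(k + a) mod 2 = (k mod 2 + a) mod 2" "(k + a) div 2 = k div 2 + (k mod 2 + a) div 2"
  for k a :: nat using ar_mod ar_div by blast+
lemma ar2: "(k + d + e) mod 2 = ((k mod 2 + d) mod 2 + e) mod 2"
  "(k + d + e) div 2 = k div 2 + (k mod 2 + d) div 2 + ((k mod 2 + d) mod 2 + e) div 2"
  for k d e :: nat
  unfolding ar_mod[of "k+d" e] ar_mod[of k d] ar_div[of "k+d" e] ar_div[of k d] by simp_all

lemma PR_D2: assumes "PR S" shows "PR (D2 i j S)"
proof -
  define F where "F = (\<lambda>(r::nat, X). {(a,b). (r + a) mod 2 = i \<and> (r + b) mod 2 = j \<and> ((r + a) div 2, (r + b) div 2) \<in> X})"
  have f1: "finite (range (\<lambda>k. shk k (D2 i j S)))"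
  proof (rule fin_range_sub[where A = "F ` ({..<2} \<times> range (\<lambda>k. shk k S))"])
    show "finite (F ` ({..<2} \<times> range (\<lambda>k. shk k S)))" using assms unfolding PR_def by simp
    fix k
    have "shk k (D2 i j S) = F (k mod 2, shk (k div 2) S)"
      by (auto simp: F_def shk_def D2_def ar1[of k])
    then show "shk k (D2 i j S) \<in> F ` ({..<2} \<times> range (\<lambda>k. shk k S))" by auto
  qed
  define G where "G = (\<lambda>(t::nat, r::nat, X). {e. (t + e) mod 2 = i \<and> r = j \<and> (t + e) div 2 \<in> X})"
  have f2: "finite (range (\<lambda>(k,d). TL (D2 i j S) k d))"
  proof (rule fin_range_sub[where A = "G ` ({..<2} \<times> {..<2} \<times> range (\<lambda>(k,d). TL S k d))"])
    show "finite (G ` ({..<2} \<times> {..<2} \<times> range (\<lambda>(k,d). TL S k d)))" using assms unfolding PR_def by simp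
    fix x :: "nat \<times> nat"
    obtain k d where x: "x = (k,d)" by (cases x)
    have "TL (D2 i j S) k d = G ((k mod 2 + d) mod 2, k mod 2, TL S (k div 2) ((k mod 2 + d) div 2))"
      by (auto simp: G_def TL_def D2_def ar2[of k d])
    moreover have "TL S (k div 2) ((k mod 2 + d) div 2) \<in> range (\<lambda>(k,d). TL S k d)"
      by (metis (no_types, lifting) case_prod_conv rangeI)
    ultimately show "(\<lambda>(k,d). TL (D2 i j S) k d) x \<in> G ` ({..<2} \<times> {..<2} \<times> range (\<lambda>(k,d). TL S k d))"
      by (auto simp: x)
  qed
  define H where "H = (\<lambda>(t::nat, r::nat, X). {e. r = i \<and> (t + e) mod 2 = j \<and> (t + e) div 2 \<in> X})"
  have f3: "finite (range (\<lambda>(k,d). TR (D2 i j S) k d))"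
  proof (rule fin_range_sub[where A = "H ` ({..<2} \<times> {..<2} \<times> range (\<lambda>(k,d). TR S k d))"])
    show "finite (H ` ({..<2} \<times> {..<2} \<times> range (\<lambda>(k,d). TR S k d)))" using assms unfolding PR_def by simp
    fix x :: "nat \<times> nat"
    obtain k d where x: "x = (k,d)" by (cases x)
    have "TR (D2 i j S) k d = H ((k mod 2 + d) mod 2, k mod 2, TR S (k div 2) ((k mod 2 + d) div 2))"
      by (auto simp: H_def TR_def D2_def ar2[of k d])
    moreover have "TR S (k div 2) ((k mod 2 + d) div 2) \<in> range (\<lambda>(k,d). TR S k d)"
      by (metis (no_types, lifting) case_prod_conv rangeI)
    ultimately show "(\<lambda>(k,d). TR (D2 i j S) k d) x \<in> H ` ({..<2} \<times> {..<2} \<times> range (\<lambda>(k,d). TR S k d))"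
      by (auto simp: x)
  qed
  show ?thesis unfolding PR_def using f1 f2 f3 by blast
qed


lemma ZZZ: True by simp

lemma conv_set: "{conv u v | u v. u \<in> L \<and> v \<in> L \<and> P u v} =
   PL {(m,n). urep m \<in> L \<and> urep n \<in> L \<and> P (urep m) (urep n)}" for L :: "unit list set"
proof (rule set_eqI iffI)+
  fix x assume "x \<in> {conv u v | u v. u \<in> L \<and> v \<in> L \<and> P u v}"
  then obtain u v where x: "x = conv u v" "u \<in> L" "v \<in> L" "P u v" by blast
  have u: "urep (length u) = u" and v: "urep (length v) = v" using unit_list by metis+
  have "x = (\<lambda>(m,n). cw m n) (length u, length v)" by (simp add: x cw_def u v)
  moreover have "(length u, length v) \<in> {(m,n). urep m \<in> L \<and> urep n \<in> L \<and> P (urep m) (urep n)}"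
    using x u v by simp
  ultimately show "x \<in> PL {(m,n). urep m \<in> L \<and> urep n \<in> L \<and> P (urep m) (urep n)}"
    unfolding PL_def by (rule image_eqI)
next
  fix x assume "x \<in> PL {(m,n). urep m \<in> L \<and> urep n \<in> L \<and> P (urep m) (urep n)}"
  then obtain m n where "x = cw m n" "urep m \<in> L" "urep n \<in> L" "P (urep m) (urep n)"
    unfolding PL_def by auto
  then show "x \<in> {conv u v | u v. u \<in> L \<and> v \<in> L \<and> P u v}" unfolding cw_def by blast
qed

lemma att_inj: "attach_map g t x = attach_map g t y \<longleftrightarrow> x = y"
  by (simp add: attach_map_def)
lemma att_Inl: "attach_map g t s = Inl x \<longleftrightarrow> s = t \<and> x = g"
  by (auto simp: attach_map_def)
lemma Inl_att: "Inl x = attach_map g t s \<longleftrightarrow> s = t \<and> x = g"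
  by (auto simp: attach_map_def)

lemma mp_image: "(p, q) \<in> map_prod f h ` R \<longleftrightarrow> (\<exists>a b. (a,b) \<in> R \<and> f a = p \<and> h b = q)"
  by force

lemma ae_LL: "(Inl x, Inl y) \<in> attach_edges \<gamma> \<eta> g t \<longleftrightarrow> (x,y) \<in> \<gamma> \<or> (x = g \<and> y = g \<and> (t,t) \<in> \<eta>)"
  by (simp add: attach_edges_def mp_image att_Inl Inl_att att_inj) blast
lemma ae_LR: "(Inl x, attach_map g t s) \<in> attach_edges \<gamma> \<eta> g t \<longleftrightarrow> (s = t \<and> (x,g) \<in> \<gamma>) \<or> (x = g \<and> (t,s) \<in> \<eta>)"
  by (simp add: attach_edges_def mp_image att_Inl Inl_att att_inj) blast
lemma ae_RL: "(attach_map g t s, Inl y) \<in> attach_edges \<gamma> \<eta> g t \<longleftrightarrow> (s = t \<and> (g,y) \<in> \<gamma>) \<or> (y = g \<and> (s,t) \<in> \<eta>)"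
  by (simp add: attach_edges_def mp_image att_Inl Inl_att att_inj) blast
lemma ae_RR: "(attach_map g t s, attach_map g t s') \<in> attach_edges \<gamma> \<eta> g t \<longleftrightarrow> (s,s') \<in> \<eta> \<or> (s = t \<and> s' = t \<and> (g,g) \<in> \<gamma>)"
  by (simp add: attach_edges_def mp_image att_Inl Inl_att att_inj) blast

lemma pres_data:
  assumes "unary_fa_presentable X \<rho>"
  obtains A :: "nat set" and f :: "nat \<Rightarrow> 'v"
  where "f ` A = X"
    and "PR {(m,n). m \<in> A \<and> n \<in> A \<and> f m = f n}"
    and "PR {(m,n). m \<in> A \<and> n \<in> A \<and> (f m, f n) \<in> \<rho>}"
proof -
  from assms obtain L :: "unit list set" and \<phi> :: "unit list \<Rightarrow> 'v" where H:
    "regular L \<and> \<phi> ` L = X \<and>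
        regular {conv u v | u v. u \<in> L \<and> v \<in> L \<and> \<phi> u = \<phi> v} \<and>
        regular {conv u v | u v. u \<in> L \<and> v \<in> L \<and> (\<phi> u, \<phi> v) \<in> \<rho>}"
    unfolding unary_fa_presentable_def by blast
  define A where "A = {n. urep n \<in> L}"
  define f where "f = (\<lambda>n. \<phi> (urep n))"
  have LA: "L = urep ` A" unfolding A_def
    by (auto simp: mem_urep_image) (metis unit_list)
  have "f ` A = X" using H unfolding LA f_def by (simp add: image_image)
  moreover have "PR {(m,n). m \<in> A \<and> n \<in> A \<and> f m = f n}"
    using H regular_PR unfolding conv_set A_def f_def by simp
  moreover have "PR {(m,n). m \<in> A \<and> n \<in> A \<and> (f m, f n) \<in> \<rho>}"
    using H regular_PR unfolding conv_set A_def f_def by simp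
  ultimately show ?thesis using that by blast
qed

lemma final_pres:
  fixes \<psi> :: "nat \<Rightarrow> 'v"
  assumes "UR A" "\<psi> ` A = X"
    and "PR {(a,b). a \<in> A \<and> b \<in> A \<and> \<psi> a = \<psi> b}"
    and "PR {(a,b). a \<in> A \<and> b \<in> A \<and> (\<psi> a, \<psi> b) \<in> \<rho>}"
  shows "unary_fa_presentable X \<rho>"
  unfolding unary_fa_presentable_def
proof (intro exI conjI)
  show "regular (urep ` A)" using UR_regular[OF assms(1)] .
  show "(\<lambda>w. \<psi> (length w)) ` urep ` A = X" using assms(2) by (simp add: image_image)
  have m: "urep m \<in> urep ` A \<longleftrightarrow> m \<in> A" for m by (simp add: mem_urep_image)
  show "regular {conv u v | u v. u \<in> urep ` A \<and> v \<in> urep ` A \<and> \<psi> (length u) = \<psi> (length v)}"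
    unfolding conv_set using PR_regular[OF assms(3)] by (simp add: m)
  show "regular {conv u v | u v. u \<in> urep ` A \<and> v \<in> urep ` A \<and> (\<psi> (length u), \<psi> (length v)) \<in> \<rho>}"
    unfolding conv_set using PR_regular[OF assms(4)] by (simp add: m)
qed

theorem lemma6p4:
  fixes G :: "'a set" and \<gamma> :: "('a \<times> 'a) set"
    and T :: "'b set" and \<eta> :: "('b \<times> 'b) set"
    and g :: 'a and t :: 'b
  assumes "digraph G \<gamma>" and "digraph T \<eta>"
    and "unary_fa_presentable G \<gamma>" and "unary_fa_presentable T \<eta>"
    and "g \<in> G" and "t \<in> T"
  shows "unary_fa_presentable (attach_vertices G T g t) (attach_edges \<gamma> \<eta> g t)"
proof -
  obtain A1 :: "nat set" and f1 :: "nat \<Rightarrow> 'a" where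
    G: "f1 ` A1 = G" and E1: "PR {(m,n). m \<in> A1 \<and> n \<in> A1 \<and> f1 m = f1 n}"
    and R1: "PR {(m,n). m \<in> A1 \<and> n \<in> A1 \<and> (f1 m, f1 n) \<in> \<gamma>}"
    by (rule pres_data[OF assms(3)])
  obtain A2 :: "nat set" and f2 :: "nat \<Rightarrow> 'b" where
    T: "f2 ` A2 = T" and E2: "PR {(m,n). m \<in> A2 \<and> n \<in> A2 \<and> f2 m = f2 n}"
    and R2: "PR {(m,n). m \<in> A2 \<and> n \<in> A2 \<and> (f2 m, f2 n) \<in> \<eta>}"
    by (rule pres_data[OF assms(4)])
  obtain m0 where m0: "m0 \<in> A1" "f1 m0 = g" using assms(5) G by blast
  obtain n0 where n0: "n0 \<in> A2" "f2 n0 = t" using assms(6) T by blast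
  define Sg where "Sg = {m. m \<in> A1 \<and> f1 m = g}"
  define St where "St = {n. n \<in> A2 \<and> f2 n = t}"
  define Pg where "Pg = {m. m \<in> A1 \<and> (f1 m, g) \<in> \<gamma>}"
  define Pg' where "Pg' = {m. m \<in> A1 \<and> (g, f1 m) \<in> \<gamma>}"
  define Qt where "Qt = {n. n \<in> A2 \<and> (t, f2 n) \<in> \<eta>}"
  define Qt' where "Qt' = {n. n \<in> A2 \<and> (f2 n, t) \<in> \<eta>}"
  have USg: "UR Sg"
  proof -
    have "Sg = {m. (m, m0) \<in> {(m,n). m \<in> A1 \<and> n \<in> A1 \<and> f1 m = f1 n}}"
      using m0 by (auto simp: Sg_def)
    thus ?thesis using UR_secL[OF E1] by simp
  qed
  have USt: "UR St"
  proof -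
    have "St = {m. (m, n0) \<in> {(m,n). m \<in> A2 \<and> n \<in> A2 \<and> f2 m = f2 n}}"
      using n0 by (auto simp: St_def)
    thus ?thesis using UR_secL[OF E2] by simp
  qed
  have UPg: "UR Pg"
  proof -
    have "Pg = {m. (m, m0) \<in> {(m,n). m \<in> A1 \<and> n \<in> A1 \<and> (f1 m, f1 n) \<in> \<gamma>}}"
      using m0 by (auto simp: Pg_def)
    thus ?thesis using UR_secL[OF R1] by simp
  qed
  have UPg': "UR Pg'"
  proof -
    have "Pg' = {m. (m0, m) \<in> {(m,n). m \<in> A1 \<and> n \<in> A1 \<and> (f1 m, f1 n) \<in> \<gamma>}}"
      using m0 by (auto simp: Pg'_def)
    thus ?thesis using UR_secR[OF R1] by simp
  qed
  have UQt: "UR Qt"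
  proof -
    have "Qt = {m. (n0, m) \<in> {(m,n). m \<in> A2 \<and> n \<in> A2 \<and> (f2 m, f2 n) \<in> \<eta>}}"
      using n0 by (auto simp: Qt_def)
    thus ?thesis using UR_secR[OF R2] by simp
  qed
  have UQt': "UR Qt'"
  proof -
    have "Qt' = {m. (m, n0) \<in> {(m,n). m \<in> A2 \<and> n \<in> A2 \<and> (f2 m, f2 n) \<in> \<eta>}}"
      using n0 by (auto simp: Qt'_def)
    thus ?thesis using UR_secL[OF R2] by simp
  qed
  define A where "A = {a. (a mod 2 = 0 \<and> a div 2 \<in> A1) \<or> (a mod 2 = 1 \<and> a div 2 \<in> A2)}"
  define \<psi> where "\<psi> = (\<lambda>a. if a mod 2 = 0 then Inl (f1 (a div 2)) else attach_map g t (f2 (a div 2)))"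
  define EQ where "EQ = {(a,b). a \<in> A \<and> b \<in> A \<and> \<psi> a = \<psi> b}"
  define ED where "ED = {(a,b). a \<in> A \<and> b \<in> A \<and> (\<psi> a, \<psi> b) \<in> attach_edges \<gamma> \<eta> g t}"
  have par: "a mod 2 = 0 \<or> a mod 2 = 1" for a :: nat by auto
  have EQ_eq: "EQ = D2 0 0 {(m,n). m \<in> A1 \<and> n \<in> A1 \<and> f1 m = f1 n}
     \<union> D2 1 1 {(m,n). m \<in> A2 \<and> n \<in> A2 \<and> f2 m = f2 n}
     \<union> D2 0 1 (Sg \<times> St) \<union> D2 1 0 (St \<times> Sg)"
  proof -
    have "(a,b) \<in> EQ \<longleftrightarrow> (a,b) \<in> D2 0 0 {(m,n). m \<in> A1 \<and> n \<in> A1 \<and> f1 m = f1 n}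
     \<union> D2 1 1 {(m,n). m \<in> A2 \<and> n \<in> A2 \<and> f2 m = f2 n}
     \<union> D2 0 1 (Sg \<times> St) \<union> D2 1 0 (St \<times> Sg)" for a b
      using par[of a] par[of b]
      by (elim disjE) (auto simp: EQ_def D2_def A_def \<psi>_def Sg_def St_def att_inj att_Inl Inl_att)
    thus ?thesis by auto
  qed
  have ED_eq: "ED = D2 0 0 ({(m,n). m \<in> A1 \<and> n \<in> A1 \<and> (f1 m, f1 n) \<in> \<gamma>} \<union> (if (t,t) \<in> \<eta> then Sg \<times> Sg else {}))
     \<union> D2 0 1 (Pg \<times> St \<union> Sg \<times> Qt)
     \<union> D2 1 0 (St \<times> Pg' \<union> Qt' \<times> Sg)
     \<union> D2 1 1 ({(m,n). m \<in> A2 \<and> n \<in> A2 \<and> (f2 m, f2 n) \<in> \<eta>} \<union> (if (g,g) \<in> \<gamma> then St \<times> St else {}))"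
  proof -
    have "(a,b) \<in> ED \<longleftrightarrow> (a,b) \<in> D2 0 0 ({(m,n). m \<in> A1 \<and> n \<in> A1 \<and> (f1 m, f1 n) \<in> \<gamma>} \<union> (if (t,t) \<in> \<eta> then Sg \<times> Sg else {}))
     \<union> D2 0 1 (Pg \<times> St \<union> Sg \<times> Qt)
     \<union> D2 1 0 (St \<times> Pg' \<union> Qt' \<times> Sg)
     \<union> D2 1 1 ({(m,n). m \<in> A2 \<and> n \<in> A2 \<and> (f2 m, f2 n) \<in> \<eta>} \<union> (if (g,g) \<in> \<gamma> then St \<times> St else {}))" for a b
      using par[of a] par[of b]
      by (elim disjE) (auto simp: ED_def D2_def A_def \<psi>_def Sg_def St_def Pg_def Pg'_def Qt_def Qt'_def
          ae_LL ae_LR ae_RL ae_RR)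
    thus ?thesis by auto
  qed
  have PEQ: "PR EQ" unfolding EQ_eq
    by (intro PR_Un PR_D2 E1 E2 PR_times USg USt)
  have PED: "PR ED" unfolding ED_eq
    by (intro PR_Un PR_D2 R1 R2 PR_times USg USt UPg UPg' UQt UQt'; simp add: PR_times USg USt PR_empty)
  have "A = {a. (a, a) \<in> EQ}" by (auto simp: EQ_def)
  hence UA: "UR A" using UR_diag[OF PEQ] by simp
  have img: "\<psi> ` A = attach_vertices G T g t"
  proof (rule set_eqI iffI)+
    fix x assume "x \<in> \<psi> ` A"
    then obtain a where "a \<in> A" "x = \<psi> a" by blast
    then show "x \<in> attach_vertices G T g t"
      using G T par[of a] unfolding attach_vertices_def A_def \<psi>_def by auto
  next
    fix x assume "x \<in> attach_vertices G T g t"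
    then consider (l) m where "m \<in> A1" "x = Inl (f1 m)" | (r) n where "n \<in> A2" "x = attach_map g t (f2 n)"
      using G T unfolding attach_vertices_def by blast
    then show "x \<in> \<psi> ` A"
    proof cases
      case l
      have "2 * m \<in> A" "\<psi> (2 * m) = x" using l by (auto simp: A_def \<psi>_def)
      then show ?thesis by (metis image_eqI)
    next
      case r
      have "2 * n + 1 \<in> A" "\<psi> (2 * n + 1) = x" using r by (auto simp: A_def \<psi>_def)
      then show ?thesis by (metis image_eqI)
    qed
  qed
  show ?thesis
    by (rule final_pres[OF UA img]) (use PEQ PED in \<open>simp_all add: EQ_def ED_def\<close>)
qed

end
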